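(* Let $I\in\{0,1\}^{n\times m}$ and let $\mathcal{G}\subseteq\mathcal{B}(\mathcal{E}(I))$ be such that $\mathcal{E}(I)=A_{\mathcal{G}}\circ B_{\mathcal{G}}$. Then every set $\mathcal{F}\subseteq\mathcal{B}(I)$ that contains, for each $\langle C,D\rangle\in\mathcal{G}$, at least one concept from the interval $\mathcal{I}_{C,D}$ of $\mathcal{B}(I)$ satisfies $I=A_{\mathcal{F}}\circ B_{\mathcal{F}}$.
   Context: For any $K\in\{0,1\}^{n\times m}$, with $X=\{1,\dots,n\}$, $Y=\{1,\dots,m\}$, define for $C\subseteq X$, $D\subseteq Y$: $C^{\uparrow_K}=\{j\in Y\mid \forall i\in C: K_{ij}=1\}$, $D^{\downarrow_K}=\{i\in X\mid \forall j\in D: K_{ij}=1\}$, and $\mathcal{B}(K)=\{\langle C,D\rangle\mid C^{\uparrow_K}=D, D^{\downarrow_K}=C\}$, ordered by $\langle C_1,D_1\rangle\leq\langle C_2,D_2\rangle$ iff $C_1\subseteq C_2$. For $\mathcal{F}=\{\langle C_1,D_1\rangle,\dots,\langle C_p,D_p\rangle\}\subseteq\mathcal{B}(K)$, $(A_{\mathcal{F}})_{il}=1$ iff $i\in C_l$ and $(B_{\mathcal{F}})_{lj}=1$ iff $j\in D_l$; $\circ$ is the Boolean product $(A\circ B)_{ij}=\max_l\min(A_{il},B_{lj})$. For the given $I$: $\gamma(C)=\langle C^{\uparrow_I\downarrow_I},C^{\uparrow_I}\rangle$, $\mu(D)=\langle D^{\downarrow_I},D^{\downarrow_I\uparrow_I}\rangle$,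 $\mathcal{I}_{C,D}=\{c\in\mathcal{B}(I)\mid\gamma(C)\leq c\leq\mu(D)\}$, $\mathcal{I}_{ij}=\mathcal{I}_{\{i\},\{j\}}$. $\mathcal{E}(I)\in\{0,1\}^{n\times m}$ is defined by $\mathcal{E}(I)_{ij}=1$ iff $\mathcal{I}_{ij}$ is non-empty and minimal w.r.t. $\subseteq$ among the non-empty sets $\mathcal{I}_{i'j'}$. *)

theory Defs
  imports Main
begin

text \<open>An n x m Boolean matrix K is represented by a predicate K :: nat \<Rightarrow> nat \<Rightarrow> bool,
  of which only the entries with row index in {1..n} and column index in {1..m} matter.\<close>

type_synonym bmat = "nat \<Rightarrow> nat \<Rightarrow> bool"
type_synonym concept = "nat set \<times> nat set"

definition up :: "nat \<Rightarrow> bmat \<Rightarrow> nat set \<Rightarrow> nat set" where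
  "up m K C = {j \<in> {1..m}. \<forall>i\<in>C. K i j}"

definition down :: "nat \<Rightarrow> bmat \<Rightarrow> nat set \<Rightarrow> nat set" where
  "down n K D = {i \<in> {1..n}. \<forall>j\<in>D. K i j}"

definition concepts :: "nat \<Rightarrow> nat \<Rightarrow> bmat \<Rightarrow> concept set" where
  "concepts n m K = {(C, D). up m K C = D \<and> down n K D = C}"

definition concept_le :: "concept \<Rightarrow> concept \<Rightarrow> bool" where
  "concept_le c1 c2 \<longleftrightarrow> fst c1 \<subseteq> fst c2"

definition bprod :: "'l set \<Rightarrow> (nat \<Rightarrow> 'l \<Rightarrow> bool) \<Rightarrow> ('l \<Rightarrow> nat \<Rightarrow> bool) \<Rightarrow> bmat" where
  "bprod L A B i j \<longleftrightarrow> (\<exists>l\<in>L. A i l \<and> B l j)"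

definition A_of :: "concept set \<Rightarrow> nat \<Rightarrow> concept \<Rightarrow> bool" where
  "A_of F i c \<longleftrightarrow> i \<in> fst c"

definition B_of :: "concept set \<Rightarrow> concept \<Rightarrow> nat \<Rightarrow> bool" where
  "B_of F c j \<longleftrightarrow> j \<in> snd c"

definition decomposes :: "nat \<Rightarrow> nat \<Rightarrow> bmat \<Rightarrow> concept set \<Rightarrow> bool" where
  "decomposes n m K F \<longleftrightarrow>
     (\<forall>i\<in>{1..n}. \<forall>j\<in>{1..m}. K i j = bprod F (A_of F) (B_of F) i j)"

definition gamma :: "nat \<Rightarrow> nat \<Rightarrow> bmat \<Rightarrow> nat set \<Rightarrow> concept" where
  "gamma n m I C = (down n I (up m I C), up m I C)"

definition mu :: "nat \<Rightarrow> nat \<Rightarrow> bmat \<Rightarrow> nat set \<Rightarrow> concept" where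
  "mu n m I D = (down n I D, up m I (down n I D))"

definition interval :: "nat \<Rightarrow> nat \<Rightarrow> bmat \<Rightarrow> nat set \<Rightarrow> nat set \<Rightarrow> concept set" where
  "interval n m I C D =
     {c \<in> concepts n m I. concept_le (gamma n m I C) c \<and> concept_le c (mu n m I D)}"

definition Iij :: "nat \<Rightarrow> nat \<Rightarrow> bmat \<Rightarrow> nat \<Rightarrow> nat \<Rightarrow> concept set" where
  "Iij n m I i j = interval n m I {i} {j}"

definition ess :: "nat \<Rightarrow> nat \<Rightarrow> bmat \<Rightarrow> bmat" where
  "ess n m I i j \<longleftrightarrow> i \<in> {1..n} \<and> j \<in> {1..m} \<and> Iij n m I i j \<noteq> {} \<and>
     (\<forall>i'\<in>{1..n}. \<forall>j'\<in>{1..m}. Iij n m I i' j' \<noteq> {} \<and> Iij n m I i' j' \<subseteq> Iij n m I i j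
        \<longrightarrow> Iij n m I i' j' = Iij n m I i j)"

end

theory Submission
  imports Defs
begin

lemma Iij_char:
  assumes c: "c \<in> concepts n m I" and i: "i \<in> {1..n}" and j: "j \<in> {1..m}"
  shows "c \<in> Iij n m I i j \<longleftrightarrow> i \<in> fst c \<and> j \<in> snd c"
proof -
  obtain A B where cAB: "c = (A, B)" by (cases c)
  have uA: "up m I A = B" and dB: "down n I B = A" using c cAB by (auto simp: concepts_def)
  have g: "concept_le (gamma n m I {i}) c \<longleftrightarrow> i \<in> A"
  proof
    assume "concept_le (gamma n m I {i}) c"
    moreover have "i \<in> down n I (up m I {i})" using i by (auto simp: down_def up_def)
    ultimately show "i \<in> A" using cAB by (auto simp: concept_le_def gamma_def)
  next
    assume iA: "i \<in> A"
    have "up m I A \<subseteq> up m I {i}" using iA by (auto simp: up_def)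
    hence "down n I (up m I {i}) \<subseteq> down n I (up m I A)" by (auto simp: down_def)
    thus "concept_le (gamma n m I {i}) c" using cAB uA dB by (auto simp: concept_le_def gamma_def)
  qed
  have u: "concept_le c (mu n m I {j}) \<longleftrightarrow> j \<in> B"
  proof
    assume "concept_le c (mu n m I {j})"
    hence "A \<subseteq> down n I {j}" using cAB by (auto simp: concept_le_def mu_def)
    thus "j \<in> B" using uA[symmetric] j by (auto simp: up_def down_def)
  next
    assume "j \<in> B"
    thus "concept_le c (mu n m I {j})" using cAB dB[symmetric]
      by (auto simp: concept_le_def mu_def down_def)
  qed
  show ?thesis using g u c cAB by (auto simp: Iij_def interval_def)
qed

lemma concepts_finite: "finite (concepts n m I)"
proof -
  have "concepts n m I \<subseteq> Pow {1..n} \<times> Pow {1..m}"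
    by (auto simp: concepts_def up_def down_def)
  thus ?thesis by (rule finite_subset) auto
qed

theorem theorem3:
  fixes n m :: nat and I :: bmat and G F :: "concept set"
  assumes "G \<subseteq> concepts n m (ess n m I)"
    and "decomposes n m (ess n m I) G"
    and "F \<subseteq> concepts n m I"
    and "\<forall>(C, D)\<in>G. F \<inter> interval n m I C D \<noteq> {}"
  shows "decomposes n m I F"
  unfolding decomposes_def
proof (intro ballI iffI)
  fix i j assume i: "i \<in> {1..n}" and j: "j \<in> {1..m}"
  assume "bprod F (A_of F) (B_of F) i j"
  then obtain c where cF: "c \<in> F" and ic: "i \<in> fst c" and jc: "j \<in> snd c"
    by (auto simp: bprod_def A_of_def B_of_def)
  have "c \<in> concepts n m I" using cF assms(3) by auto
  then have "fst c = down n I (snd c)" by (auto simp: concepts_def)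
  thus "I i j" using ic jc by (auto simp: down_def)
next
  fix i j assume i: "i \<in> {1..n}" and j: "j \<in> {1..m}" and Iij: "I i j"
  have fin: "\<And>a b. finite (Iij n m I a b)"
    using concepts_finite by (rule finite_subset[rotated]) (auto simp: Iij_def interval_def)
  define P where "P = {(a, b). a \<in> {1..n} \<and> b \<in> {1..m} \<and> Iij n m I a b \<noteq> {} \<and> Iij n m I a b \<subseteq> Iij n m I i j}"
  have ne: "Iij n m I i j \<noteq> {}"
  proof -
    have "gamma n m I {i} \<in> concepts n m I"
      using i by (auto simp: gamma_def concepts_def up_def down_def; blast)
    moreover have "i \<in> fst (gamma n m I {i}) \<and> j \<in> snd (gamma n m I {i})"
      using i j Iij by (auto simp: gamma_def up_def down_def)
    ultimately show ?thesis using Iij_char[OF _ i j] by blast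
  qed
  have "(i, j) \<in> P" using i j ne by (auto simp: P_def)
  then obtain p where pP: "p \<in> P" and pmin: "\<And>q. q \<in> P \<Longrightarrow> card (case p of (a,b) \<Rightarrow> Iij n m I a b) \<le> card (case q of (a,b) \<Rightarrow> Iij n m I a b)"
    using ex_has_least_nat[of "\<lambda>q. q \<in> P" "(i,j)" "\<lambda>q. card (case q of (a,b) \<Rightarrow> Iij n m I a b)"] by blast
  obtain i' j' where p: "p = (i', j')" by (cases p)
  have i': "i' \<in> {1..n}" and j': "j' \<in> {1..m}" and ne': "Iij n m I i' j' \<noteq> {}"
    and sub: "Iij n m I i' j' \<subseteq> Iij n m I i j" using pP p by (auto simp: P_def)
  have "ess n m I i' j'"
    unfolding ess_def
  proof (intro conjI i' j' ne' ballI impI)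
    fix a b assume a: "a \<in> {1..n}" and b: "b \<in> {1..m}"
      and h: "Iij n m I a b \<noteq> {} \<and> Iij n m I a b \<subseteq> Iij n m I i' j'"
    hence "(a, b) \<in> P" using sub by (auto simp: P_def)
    from pmin[OF this] have "card (Iij n m I i' j') \<le> card (Iij n m I a b)" using p by simp
    thus "Iij n m I a b = Iij n m I i' j'" using h fin by (meson card_seteq)
  qed
  with assms(2) i' j' obtain l where lG: "l \<in> G" and il: "i' \<in> fst l" and jl: "j' \<in> snd l"
    by (auto simp: decomposes_def bprod_def A_of_def B_of_def)
  obtain C D where l: "l = (C, D)" by (cases l)
  with lG assms(4) obtain c where cF: "c \<in> F" and cint: "c \<in> interval n m I C D" by blast
  have cc: "c \<in> concepts n m I" using cF assms(3) by auto
  obtain A B where cAB: "c = (A, B)" by (cases c)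
  have uA: "up m I A = B" using cc cAB by (auto simp: concepts_def)
  have "i' \<in> down n I (up m I C)" using i' il l by (auto simp: down_def up_def)
  hence i'A: "i' \<in> A" using cint cAB by (auto simp: interval_def concept_le_def gamma_def)
  have "A \<subseteq> down n I D" using cint cAB by (auto simp: interval_def concept_le_def mu_def)
  hence "j' \<in> B" using jl l j' uA[symmetric] by (auto simp: up_def down_def)
  hence "c \<in> Iij n m I i' j'" using Iij_char[OF cc i' j'] i'A cAB by simp
  hence "c \<in> Iij n m I i j" using sub by blast
  hence "i \<in> fst c \<and> j \<in> snd c" using Iij_char[OF cc i j] by simp
  thus "bprod F (A_of F) (B_of F) i j" using cF by (auto simp: bprod_def A_of_def B_of_def)
qed

end
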